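(* The two-player Tower of Hanoi game under normal play on $l\ge 4$ pegs with $n\ge 3$ disks is a draw (neither player can force a win), for each of the ending conditions (EC1)–(EC5).
   Context: Tower of Hanoi on $l$ pegs (labeled $1,\dots,l$) with $n$ disks of pairwise distinct sizes: a position assigns each disk to a peg, disks on each peg stacked with sizes decreasing from bottom to top. A legal move transfers the top disk of one peg to a different peg that is empty or has a larger top disk. A tower position is one with all disks on one peg. Two-player game: Anh (first player) and Bao (second player) alternate moves starting from the position with all disks on Peg 1; a player may not move the disk that the opponent moved in the immediately preceding move. The game ends when the tower has been transferred to a final peg, according to one fixed ending condition: (EC1) all disks on a given peg distinct from Peg 1; (EC2) all disks on Peg 1, the largest disk having been moved at least once; (EC3) all disks on Peg 1, the smallest disk having been moved at least once; (EC4) all disks on any peg, the largest disk having been moved at least once; (EC5) all disks on any peg, the smallest disk having been moved at least once. A move creating a tower position that does not end the game (tower on a non-final peg) is not allowed. Normal play: the player who makes the last (game-ending) move wins; if neither player can force a win, the game is a draw. *)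

theory Defs
  imports Main
begin

text \<open>Pegs are labelled 1..l; Peg 1 is the start peg.  Disks are 0..<n, disk d being
  smaller than disk e iff d < e (disk 0 smallest, disk n-1 largest).  Since disks on a peg
  are always stacked in decreasing size, a position is just the map disk -> peg.\<close>

datatype ending_cond = EC1 nat | EC2 | EC3 | EC4 | EC5

record hstate =
  pos :: "nat \<Rightarrow> nat"
  lastd :: "nat option"      \<comment> \<open>disk moved in the immediately preceding move\<close>
  bigm :: bool               \<comment> \<open>largest disk has been moved at least once\<close>
  smallm :: bool             \<comment> \<open>smallest disk has been moved at least once\<close>

definition init_state :: hstate where
  "init_state = \<lparr>pos = (\<lambda>_. 1), lastd = None, bigm = False, smallm = False\<rparr>"

definition is_tower :: "nat \<Rightarrow> (nat \<Rightarrow> nat) \<Rightarrow> bool" where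
  "is_tower n p \<longleftrightarrow> (\<exists>q. \<forall>e<n. p e = q)"

definition tower_on :: "nat \<Rightarrow> (nat \<Rightarrow> nat) \<Rightarrow> nat \<Rightarrow> bool" where
  "tower_on n p q \<longleftrightarrow> (\<forall>e<n. p e = q)"

fun game_ends :: "nat \<Rightarrow> ending_cond \<Rightarrow> hstate \<Rightarrow> bool" where
  "game_ends n (EC1 f) s = tower_on n (pos s) f"
| "game_ends n EC2 s = (tower_on n (pos s) 1 \<and> bigm s)"
| "game_ends n EC3 s = (tower_on n (pos s) 1 \<and> smallm s)"
| "game_ends n EC4 s = (is_tower n (pos s) \<and> bigm s)"
| "game_ends n EC5 s = (is_tower n (pos s) \<and> smallm s)"

definition do_move :: "nat \<Rightarrow> hstate \<Rightarrow> nat \<Rightarrow> nat \<Rightarrow> hstate" where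
  "do_move n s d p = \<lparr>pos = (pos s)(d := p), lastd = Some d,
                      bigm = (bigm s \<or> d = n - 1), smallm = (smallm s \<or> d = 0)\<rparr>"

definition legal :: "nat \<Rightarrow> nat \<Rightarrow> ending_cond \<Rightarrow> hstate \<Rightarrow> nat \<Rightarrow> nat \<Rightarrow> bool" where
  "legal l n ec s d p \<longleftrightarrow>
     d < n \<and> 1 \<le> p \<and> p \<le> l \<and> pos s d \<noteq> p \<and>
     (\<forall>e<n. pos s e = pos s d \<longrightarrow> d \<le> e) \<and>
     (\<forall>e<n. pos s e = p \<longrightarrow> d < e) \<and>
     lastd s \<noteq> Some d \<and>
     (is_tower n (pos (do_move n s d p)) \<longrightarrow> game_ends n ec (do_move n s d p))"

text \<open>The player to move in state s can force a win (i.e. force making the game-ending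
  move after finitely many moves).  A player with no legal move counts as losing.\<close>
inductive can_force_win :: "nat \<Rightarrow> nat \<Rightarrow> ending_cond \<Rightarrow> hstate \<Rightarrow> bool"
  for l n ec where
  "\<lbrakk> legal l n ec s d p;
     game_ends n ec (do_move n s d p) \<or>
     (\<forall>d' p'. legal l n ec (do_move n s d p) d' p' \<longrightarrow>
        \<not> game_ends n ec (do_move n (do_move n s d p) d' p') \<and>
        can_force_win l n ec (do_move n (do_move n s d p) d' p')) \<rbrakk>
   \<Longrightarrow> can_force_win l n ec s"

definition forced_loss :: "nat \<Rightarrow> nat \<Rightarrow> ending_cond \<Rightarrow> hstate \<Rightarrow> bool" where
  "forced_loss l n ec s \<longleftrightarrow>
     (\<forall>d p. legal l n ec s d p \<longrightarrow>
        \<not> game_ends n ec (do_move n s d p) \<and> can_force_win l n ec (do_move n s d p))"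

definition valid_ec :: "nat \<Rightarrow> ending_cond \<Rightarrow> bool" where
  "valid_ec l ec = (case ec of EC1 f \<Rightarrow> 2 \<le> f \<and> f \<le> l | _ \<Rightarrow> True)"

text \<open>Draw: neither Anh (first player) nor Bao (second player) can force a win.\<close>
definition is_draw :: "nat \<Rightarrow> nat \<Rightarrow> ending_cond \<Rightarrow> bool" where
  "is_draw l n ec \<longleftrightarrow> \<not> can_force_win l n ec init_state \<and> \<not> forced_loss l n ec init_state"

end

theory Submission
  imports Defs
begin

definition wfp :: "nat \<Rightarrow> nat \<Rightarrow> (nat \<Rightarrow> nat) \<Rightarrow> bool" where
  "wfp l n f \<longleftrightarrow> (\<forall>e<n. 1 \<le> f e \<and> f e \<le> l)"

definition cons :: "nat \<Rightarrow> (nat \<Rightarrow> nat) \<Rightarrow> bool" where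
  "cons n f \<longleftrightarrow> (\<forall>e<n. 1 \<le> e \<longrightarrow> f e = f 1)"

definition PP :: "nat \<Rightarrow> hstate \<Rightarrow> bool" where
  "PP n s \<longleftrightarrow> \<not> cons n (pos s) \<or> lastd s = Some 0"

lemma pos_do_move[simp]: "pos (do_move n s d p) = (pos s)(d := p)"
  and lastd_do_move[simp]: "lastd (do_move n s d p) = Some d"
  by (simp_all add: do_move_def)

lemma tower_cons: "is_tower n f \<Longrightarrow> cons n f"
  unfolding is_tower_def cons_def
  by (metis less_le_trans less_one not_le)

lemma game_ends_tower: "game_ends n ec s \<Longrightarrow> is_tower n (pos s)"
  by (cases ec) (auto simp: is_tower_def tower_on_def)

lemma cons_upd0: "cons n (f(0 := x)) = cons n f"
  by (simp add: cons_def)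

lemma legalI:
  assumes "d < n" "1 \<le> p" "p \<le> l" "pos s d \<noteq> p"
    "\<forall>e<n. pos s e = pos s d \<longrightarrow> d \<le> e"
    "\<forall>e<n. pos s e = p \<longrightarrow> d < e"
    "lastd s \<noteq> Some d"
    "\<not> is_tower n ((pos s)(d := p))"
  shows "legal l n ec s d p"
  using assms by (simp add: legal_def)

lemma no_tower:
  assumes n3: "n \<ge> 3" and P: "PP n s" and L: "legal l n ec s d p"
  shows "\<not> is_tower n ((pos s)(d := p))"
proof
  assume "is_tower n ((pos s)(d := p))"
  then obtain q where q: "\<forall>e<n. ((pos s)(d := p)) e = q" by (auto simp: is_tower_def)
  show False
  proof (cases "d = 0")
    case True
    with L have "lastd s \<noteq> Some 0" by (simp add: legal_def)
    with P have nc: "\<not> cons n (pos s)" by (simp add: PP_def)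
    have "cons n (pos s)" unfolding cons_def
    proof (intro allI impI)
      fix e assume "e < n" "1 \<le> e"
      then show "pos s e = pos s 1" using q True n3
        by (metis fun_upd_other not_one_le_zero less_le_trans le_refl one_less_numeral_iff semiring_norm(76) numeral_le_iff less_imp_le_nat
            order_less_le_trans One_nat_def Suc_le_lessD numeral_3_eq_3 le_less)
    qed
    with nc show False by simp
  next
    case False
    have "d < n" using L by (simp add: legal_def)
    then have "p = q" using q by (metis fun_upd_same)
    moreover have "pos s 0 = q" using q False n3 by (metis fun_upd_other gr0I less_le_trans numeral_3_eq_3 zero_less_Suc)
    ultimately have "pos s 0 = p" by simp
    moreover have "\<forall>e<n. pos s e = p \<longrightarrow> d < e" using L by (simp add: legal_def)
    moreover have "0 < n" using n3 by simp
    ultimately have "d < 0" by blast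
    then show False by simp
  qed
qed


lemma not_tower_two:
  assumes "x < n" "y < n" "f x \<noteq> f y"
  shows "\<not> is_tower n f"
  using assms by (auto simp: is_tower_def)

lemma not_cons_two:
  assumes "1 \<le> x" "x < n" "1 \<le> y" "y < n" "f x \<noteq> f y"
  shows "\<not> cons n f"
  using assms unfolding cons_def by metis

lemma reply:
  assumes n3: "n \<ge> 3" and l4: "l \<ge> 4" and W: "wfp l n (pos s)"
    and ld: "lastd s = Some d" and nt: "\<not> is_tower n (pos s)"
    and cd: "cons n (pos s) \<longrightarrow> d \<noteq> 0"
  shows "\<exists>d' p'. legal l n ec s d' p' \<and> wfp l n (pos (do_move n s d' p'))
           \<and> PP n (do_move n s d' p')"
proof -
  define z where "z = pos s 0"
  have n0: "0 < n" "1 < n" "2 < n" using n3 by auto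
  show ?thesis
  proof (cases "cons n (pos s)")
    case True
    define b where "b = pos s 1"
    have zb: "z \<noteq> b"
    proof
      assume "z = b"
      then have "\<forall>e<n. pos s e = b" using True unfolding cons_def z_def b_def
        by (metis not_less_eq_eq One_nat_def le0 le_zero_eq less_one)
      then show False using nt by (auto simp: is_tower_def)
    qed
    define p' where "p' = (if 1 \<noteq> z \<and> 1 \<noteq> b then 1 else if 2 \<noteq> z \<and> 2 \<noteq> b then 2 else (3::nat))"
    have p': "p' \<noteq> z" "p' \<noteq> b" "1 \<le> p'" "p' \<le> l" using zb l4 unfolding p'_def by auto
    have "d \<noteq> 0" using True cd by simp
    have nt': "\<not> is_tower n ((pos s)(0 := p'))"
      by (rule not_tower_two[of 0 n 1]) (use n0 p' b_def in auto)
    have L: "legal l n ec s 0 p'"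
      by (rule legalI) (use n0 p' z_def ld \<open>d \<noteq> 0\<close> nt' in \<open>auto intro!: gr0I\<close>)
    moreover have "wfp l n (pos (do_move n s 0 p'))" using W p' by (auto simp: wfp_def)
    moreover have "PP n (do_move n s 0 p')" by (simp add: PP_def)
    ultimately show ?thesis by blast
  next
    case nc: False
    show ?thesis
    proof (cases "d = 0")
      case False
      define p' where "p' = (if z \<noteq> 1 then 1 else (2::nat))"
      have p': "p' \<noteq> z" "1 \<le> p'" "p' \<le> l" using l4 unfolding p'_def by auto
      have nc': "\<not> cons n ((pos s)(0 := p'))" using nc by (simp add: cons_upd0)
      have nt': "\<not> is_tower n ((pos s)(0 := p'))" using nc' tower_cons by blast
      have L: "legal l n ec s 0 p'"
        by (rule legalI) (use n0 p' z_def ld False nt' in \<open>auto intro!: gr0I\<close>)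
      moreover have "wfp l n (pos (do_move n s 0 p'))" using W p' by (auto simp: wfp_def)
      moreover have "PP n (do_move n s 0 p')" by (simp add: PP_def)
      ultimately show ?thesis by blast
    next
      case d0: True
      obtain e where e: "1 \<le> e" "e < n" "pos s e \<noteq> pos s 1" using nc unfolding cons_def by blast
      define a where "a = (if pos s 1 \<noteq> z then pos s 1 else pos s e)"
      have az: "a \<noteq> z" using e unfolding a_def by auto
      have aex: "\<exists>x. x < n \<and> pos s x = a" using e n0 unfolding a_def by (metis less_trans one_less_numeral_iff semiring_norm(76))
      define t where "t = (LEAST x. x < n \<and> pos s x = a)"
      have t: "t < n" "pos s t = a" using LeastI_ex[OF aex] unfolding t_def by auto
      have tmin: "\<And>x. x < n \<Longrightarrow> pos s x = a \<Longrightarrow> t \<le> x"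
        unfolding t_def by (rule Least_le) simp
      have t1: "1 \<le> t" using t az z_def by (cases t) auto
      show ?thesis
      proof (cases "\<exists>c. 1 \<le> c \<and> c \<le> l \<and> c \<noteq> a \<and> c \<noteq> z \<and> (\<forall>x<n. pos s x \<noteq> c)")
        case True
        then obtain c where c: "1 \<le> c" "c \<le> l" "c \<noteq> a" "c \<noteq> z" "\<forall>x<n. pos s x \<noteq> c" by blast
        define u where "u = (if t = 1 then 2 else (1::nat))"
        have u: "1 \<le> u" "u < n" "u \<noteq> t" using n0 unfolding u_def by auto
        have nc': "\<not> cons n ((pos s)(t := c))"
          by (rule not_cons_two[of t n u]) (use t1 t u c in auto)
        have nt': "\<not> is_tower n ((pos s)(t := c))" using nc' tower_cons by blast
        have L: "legal l n ec s t c"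
          by (rule legalI) (use t tmin c ld d0 t1 nt' in auto)
        moreover have "wfp l n (pos (do_move n s t c))" using W c by (auto simp: wfp_def)
        moreover have "PP n (do_move n s t c)" using nc' by (simp add: PP_def)
        ultimately show ?thesis by blast
      next
        case False
        have "\<exists>c1\<in>{1,2,3,4::nat}. \<exists>c2\<in>{1,2,3,4}. c1\<noteq>c2 \<and> c1\<noteq>a \<and> c1\<noteq>z \<and> c2\<noteq>a \<and> c2\<noteq>z"
          by (cases "a = 1"; cases "a = 2"; cases "z = 1"; cases "z = 2"; auto)
        then obtain c1 c2 where c12: "c1 \<in> {1,2,3,4}" "c2 \<in> {1,2,3,4}" "c1 \<noteq> c2"
          "c1 \<noteq> a" "c1 \<noteq> z" "c2 \<noteq> a" "c2 \<noteq> z" by blast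
        have cc: "1 \<le> c1" "c1 \<le> l" "1 \<le> c2" "c2 \<le> l" "c1 \<noteq> c2"
          "c1 \<noteq> a" "c1 \<noteq> z" "c2 \<noteq> a" "c2 \<noteq> z" using c12 l4 by auto
        have e1: "\<exists>x. x < n \<and> pos s x = c1" using False cc by blast
        have e2: "\<exists>x. x < n \<and> pos s x = c2" using False cc by blast
        define t1 where "t1 = (LEAST x. x < n \<and> pos s x = c1)"
        define t2 where "t2 = (LEAST x. x < n \<and> pos s x = c2)"
        have T1: "t1 < n" "pos s t1 = c1" using LeastI_ex[OF e1] unfolding t1_def by auto
        have T2: "t2 < n" "pos s t2 = c2" using LeastI_ex[OF e2] unfolding t2_def by auto
        have m1: "\<And>x. x < n \<Longrightarrow> pos s x = c1 \<Longrightarrow> t1 \<le> x"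
          unfolding t1_def by (rule Least_le) simp
        have m2: "\<And>x. x < n \<Longrightarrow> pos s x = c2 \<Longrightarrow> t2 \<le> x"
          unfolding t2_def by (rule Least_le) simp
        have t11: "1 \<le> t1" using T1 cc z_def by (cases t1) auto
        have t21: "1 \<le> t2" using T2 cc z_def by (cases t2) auto
        have "t1 \<noteq> t2" using T1 T2 cc by auto
        show ?thesis
        proof (cases "t1 < t2")
          case True
          have nc': "\<not> cons n ((pos s)(t1 := c2))"
            by (rule not_cons_two[of t1 n t]) (use t1 t T1 t11 cc in auto)
          have nt': "\<not> is_tower n ((pos s)(t1 := c2))" using nc' tower_cons by blast
          have L: "legal l n ec s t1 c2"
            by (rule legalI) (use T1 m1 m2 True cc ld d0 t11 nt' in \<open>auto dest: m2\<close>)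
          moreover have "wfp l n (pos (do_move n s t1 c2))" using W cc by (auto simp: wfp_def)
          moreover have "PP n (do_move n s t1 c2)" using nc' by (simp add: PP_def)
          ultimately show ?thesis by blast
        next
          case False
          then have lt: "t2 < t1" using \<open>t1 \<noteq> t2\<close> by simp
          have nc': "\<not> cons n ((pos s)(t2 := c1))"
            by (rule not_cons_two[of t2 n t]) (use t1 t T2 t21 cc in auto)
          have nt': "\<not> is_tower n ((pos s)(t2 := c1))" using nc' tower_cons by blast
          have L: "legal l n ec s t2 c1"
            by (rule legalI) (use T2 m1 m2 lt cc ld d0 t21 nt' in \<open>auto dest: m1\<close>)
          moreover have "wfp l n (pos (do_move n s t2 c1))" using W cc by (auto simp: wfp_def)
          moreover have "PP n (do_move n s t2 c1)" using nc' by (simp add: PP_def)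
          ultimately show ?thesis by blast
        qed
      qed
    qed
  qed
qed


lemma not_cfw:
  assumes "can_force_win l n ec s" "n \<ge> 3" "l \<ge> 4"
  shows "wfp l n (pos s) \<Longrightarrow> PP n s \<Longrightarrow> False"
  using assms(1)
proof (induction rule: can_force_win.induct)
  case (1 s d p)
  define s' where "s' = do_move n s d p"
  have nt: "\<not> is_tower n (pos s')"
    using no_tower[OF assms(2) \<open>PP n s\<close> \<open>legal l n ec s d p\<close>] by (simp add: s'_def)
  then have "\<not> game_ends n ec s'" using game_ends_tower by blast
  with 1(2) have H: "\<forall>d' p'. legal l n ec s' d' p' \<longrightarrow>
        (wfp l n (pos (do_move n s' d' p')) \<longrightarrow> PP n (do_move n s' d' p') \<longrightarrow> False)"
    unfolding s'_def by blast
  have W': "wfp l n (pos s')" using 1(1,3) by (auto simp: wfp_def legal_def s'_def)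
  have cd: "cons n (pos s') \<longrightarrow> d \<noteq> 0"
  proof
    assume c: "cons n (pos s')"
    show "d \<noteq> 0"
    proof
      assume d0: "d = 0"
      then have "cons n (pos s)" using c by (simp add: s'_def cons_upd0)
      then have "lastd s = Some 0" using 1(4) by (simp add: PP_def)
      then show False using 1(1) d0 by (simp add: legal_def)
    qed
  qed
  obtain d' p' where "legal l n ec s' d' p'" "wfp l n (pos (do_move n s' d' p'))"
      "PP n (do_move n s' d' p')"
    using reply[OF assms(2,3) W' _ nt cd, where ec=ec] by (auto simp: s'_def)
  then show False using H by blast
qed

theorem theorem2:
  fixes l n :: nat and ec :: ending_cond
  assumes "l \<ge> 4" and "n \<ge> 3" and "valid_ec l ec"
  shows "is_draw l n ec"
proof -
  have n0: "0 < n" "1 < n" "2 < n" using assms(2) by auto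
  have A: "\<not> can_force_win l n ec init_state"
  proof
    assume "can_force_win l n ec init_state"
    then obtain d p where L: "legal l n ec init_state d p" and
      R: "game_ends n ec (do_move n init_state d p) \<or>
     (\<forall>d' p'. legal l n ec (do_move n init_state d p) d' p' \<longrightarrow>
        \<not> game_ends n ec (do_move n (do_move n init_state d p) d' p') \<and>
        can_force_win l n ec (do_move n (do_move n init_state d p) d' p'))"
      by (cases rule: can_force_win.cases) blast
    have d0: "d = 0" using L n0 by (auto simp: legal_def init_state_def)
    have p: "p \<noteq> 1" "1 \<le> p" "p \<le> l" using L by (auto simp: legal_def init_state_def)
    define s' where "s' = do_move n init_state d p"
    have ps': "pos s' = (\<lambda>_. 1)(0 := p)" by (simp add: s'_def d0 init_state_def)
    have "\<not> is_tower n (pos s')"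
      by (rule not_tower_two[of 0 n 1]) (use n0 p ps' in auto)
    then have ng: "\<not> game_ends n ec s'" using game_ends_tower by blast
    define c where "c = (if p \<noteq> 2 then 2 else (3::nat))"
    have c: "c \<noteq> 1" "c \<noteq> p" "1 \<le> c" "c \<le> l" using assms(1) unfolding c_def by auto
    have nc': "\<not> cons n ((pos s')(1 := c))"
      by (rule not_cons_two[of 1 n 2]) (use n0 c ps' in auto)
    have nt': "\<not> is_tower n ((pos s')(1 := c))" using nc' tower_cons by blast
    have L': "legal l n ec s' 1 c"
      by (rule legalI) (use n0 c ps' p nt' d0 in \<open>auto simp: s'_def intro!: gr0I\<close>)
    have "can_force_win l n ec (do_move n s' 1 c)" using R ng L' unfolding s'_def by blast
    moreover have "wfp l n (pos (do_move n s' 1 c))" using c p ps' by (auto simp: wfp_def)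
    moreover have "PP n (do_move n s' 1 c)" using nc' by (simp add: PP_def)
    ultimately show False using not_cfw assms(1,2) by blast
  qed
  have B: "\<not> forced_loss l n ec init_state"
  proof -
    define s' where "s' = do_move n init_state 0 2"
    have ps': "pos s' = (\<lambda>_. 1)(0 := 2)" by (simp add: s'_def init_state_def)
    have nt: "\<not> is_tower n ((pos init_state)(0 := 2))"
      by (rule not_tower_two[of 0 n 1]) (use n0 in \<open>auto simp: init_state_def\<close>)
    have L: "legal l n ec init_state 0 2"
      by (rule legalI) (use n0 assms(1) nt in \<open>auto simp: init_state_def\<close>)
    have "wfp l n (pos s')" using ps' assms(1) by (auto simp: wfp_def)
    moreover have "PP n s'" by (simp add: PP_def s'_def)
    ultimately have "\<not> can_force_win l n ec s'" using not_cfw assms(1,2) by blast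
    then show ?thesis using L unfolding forced_loss_def s'_def by blast
  qed
  show ?thesis using A B by (simp add: is_draw_def)
qed

end
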